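(* Let $\mathcal{H}$ be a complex Hilbert space, let $A\in\mathcal{B}(\mathcal{H})$ be a nonzero positive operator, and let $\mathbb{A}=\begin{pmatrix}A&O\\O&A\end{pmatrix}$ on $\mathcal{H}\oplus\mathcal{H}$. Let $P,Q,R,S\in\mathcal{B}_{A^{1/2}}(\mathcal{H})$. Then $$\omega_{\mathbb{A}}\left[\begin{pmatrix}P&Q\\R&S\end{pmatrix}\right]\leq\max\{\omega_A(P),\omega_A(S)\}+\frac{\omega_A(Q+R)+\omega_A(Q-R)}{2}.$$
   Context: For a positive operator $A$ on $\mathcal{H}$, $\langle x,y\rangle_A:=\langle Ax,y\rangle$ and $\|x\|_A:=\sqrt{\langle x,x\rangle_A}$. $\mathcal{B}_{A^{1/2}}(\mathcal{H})$ is the set of $T\in\mathcal{B}(\mathcal{H})$ such that $\|Tx\|_A\le\lambda\|x\|_A$ for some $\lambda>0$ and all $x$. $\omega_A(T):=\sup\{|\langle Tx,x\rangle_A|:x\in\mathcal{H},\|x\|_A=1\}$. $\omega_{\mathbb{A}}$ is defined analogously on $\mathcal{H}\oplus\mathcal{H}$ with $\langle (x_1,x_2),(y_1,y_2)\rangle_{\mathbb{A}}=\langle x_1,y_1\rangle_A+\langle x_2,y_2\rangle_A$. *)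

theory Defs
  imports "HOL-Analysis.Analysis"
begin

text \<open>The library only has
real inner product spaces, so we axiomatize the complex structure as a type class on top of
a real normed vector space: a complex scalar multiplication compatible with the real one,
and a sesquilinear inner product (linear in the first argument, conjugate-symmetric,
positive definite) that induces the norm.  A complex Hilbert space is a type of sort
complex_inner that is moreover a complete_space.\<close>

class complex_inner = real_normed_vector +
  fixes scaleC :: "complex \<Rightarrow> 'a \<Rightarrow> 'a"
  fixes cinner :: "'a \<Rightarrow> 'a \<Rightarrow> complex"
  assumes scaleC_add_right: "scaleC a (x + y) = scaleC a x + scaleC a y"
    and scaleC_add_left: "scaleC (a + b) x = scaleC a x + scaleC b x"
    and scaleC_scaleC: "scaleC a (scaleC b x) = scaleC (a * b) x"
    and scaleC_one: "scaleC 1 x = x"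
    and scaleC_of_real: "scaleC (complex_of_real r) x = scaleR r x"
    and cinner_conj_commute: "cinner y x = cnj (cinner x y)"
    and cinner_add_left: "cinner (x + y) z = cinner x z + cinner y z"
    and cinner_scaleC_left: "cinner (scaleC a x) y = a * cinner x y"
    and cinner_self_nonneg: "0 \<le> Re (cinner x x)"
    and cinner_self_eq_zero: "cinner x x = 0 \<longleftrightarrow> x = 0"
    and norm_eq_sqrt_cinner: "norm x = sqrt (Re (cinner x x))"

definition bounded_clinear :: "('a::complex_inner \<Rightarrow> 'a) \<Rightarrow> bool" where
  "bounded_clinear T \<longleftrightarrow>
     (\<forall>x y. T (x + y) = T x + T y) \<and> (\<forall>c x. T (scaleC c x) = scaleC c (T x)) \<and>
     (\<exists>K. \<forall>x. norm (T x) \<le> norm x * K)"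

definition positive_op :: "('a::complex_inner \<Rightarrow> 'a) \<Rightarrow> bool" where
  "positive_op A \<longleftrightarrow> bounded_clinear A \<and>
     (\<forall>x. Im (cinner (A x) x) = 0 \<and> 0 \<le> Re (cinner (A x) x))"

definition A_inner :: "('a::complex_inner \<Rightarrow> 'a) \<Rightarrow> 'a \<Rightarrow> 'a \<Rightarrow> complex" where
  "A_inner A x y = cinner (A x) y"

definition A_norm :: "('a::complex_inner \<Rightarrow> 'a) \<Rightarrow> 'a \<Rightarrow> real" where
  "A_norm A x = sqrt (Re (A_inner A x x))"

definition B_A_half :: "('a::complex_inner \<Rightarrow> 'a) \<Rightarrow> ('a \<Rightarrow> 'a) set" where
  "B_A_half A = {T. bounded_clinear T \<and>
      (\<exists>c>0. \<forall>x. A_norm A (T x) \<le> c * A_norm A x)}"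

definition omega_A :: "('a::complex_inner \<Rightarrow> 'a) \<Rightarrow> ('a \<Rightarrow> 'a) \<Rightarrow> real" where
  "omega_A A T = Sup {cmod (A_inner A (T x) x) | x. A_norm A x = 1}"

text \<open>The space H \<oplus> H is modelled as the product type; \<open>\<bbA> = diag(A,A)\<close> induces
  \<open>\<langle>(x1,x2),(y1,y2)\<rangle>_\<bbA> = \<langle>x1,y1\<rangle>_A + \<langle>x2,y2\<rangle>_A\<close>.\<close>
definition AA_inner :: "('a::complex_inner \<Rightarrow> 'a) \<Rightarrow> 'a \<times> 'a \<Rightarrow> 'a \<times> 'a \<Rightarrow> complex" where
  "AA_inner A x y = A_inner A (fst x) (fst y) + A_inner A (snd x) (snd y)"

definition AA_norm :: "('a::complex_inner \<Rightarrow> 'a) \<Rightarrow> 'a \<times> 'a \<Rightarrow> real" where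
  "AA_norm A x = sqrt (Re (AA_inner A x x))"

definition omega_AA :: "('a::complex_inner \<Rightarrow> 'a) \<Rightarrow> ('a \<times> 'a \<Rightarrow> 'a \<times> 'a) \<Rightarrow> real" where
  "omega_AA A T = Sup {cmod (AA_inner A (T x) x) | x. AA_norm A x = 1}"

definition block_op :: "('a::complex_inner \<Rightarrow> 'a) \<Rightarrow> ('a \<Rightarrow> 'a) \<Rightarrow> ('a \<Rightarrow> 'a) \<Rightarrow> ('a \<Rightarrow> 'a)
    \<Rightarrow> 'a \<times> 'a \<Rightarrow> 'a \<times> 'a" where
  "block_op P Q R S x = (P (fst x) + Q (snd x), R (fst x) + S (snd x))"

end

theory Submission
  imports Defs
begin

lemma scaleC_zero_right[simp]: "scaleC a (0::'a::complex_inner) = 0"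
  by (metis add_cancel_right_right add_0 scaleC_add_right)

lemma scaleC_minus_right: "scaleC a (- x::'a::complex_inner) = - scaleC a x"
  by (metis add.right_inverse add_eq_0_iff scaleC_add_right scaleC_zero_right)

lemma scaleC_diff_right: "scaleC a (x - y::'a::complex_inner) = scaleC a x - scaleC a y"
  by (metis diff_conv_add_uminus scaleC_add_right scaleC_minus_right)

lemma cinner_add_right: "cinner (x::'a::complex_inner) (y + z) = cinner x y + cinner x z"
  by (metis cinner_add_left cinner_conj_commute complex_cnj_add)

lemma cinner_scaleC_right: "cinner (x::'a::complex_inner) (scaleC a y) = cnj a * cinner x y"
  by (metis cinner_scaleC_left cinner_conj_commute complex_cnj_mult complex_cnj_cnj)

lemma cinner_diff_left: "cinner (x - y::'a::complex_inner) z = cinner x z - cinner y z"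
  by (metis add_diff_cancel_right' cinner_add_left diff_add_cancel)

lemma cinner_diff_right: "cinner (x::'a::complex_inner) (y - z) = cinner x y - cinner x z"
  by (metis add_diff_cancel_right' cinner_add_right diff_add_cancel)

definition clin_op :: "('a::complex_inner \<Rightarrow> 'a) \<Rightarrow> bool" where
  "clin_op T \<longleftrightarrow> (\<forall>x y. T (x + y) = T x + T y) \<and> (\<forall>c x. T (scaleC c x) = scaleC c (T x))"

lemma clin_add: "clin_op T \<Longrightarrow> T (x + y) = T x + T y" by (simp add: clin_op_def)
lemma clin_scale: "clin_op T \<Longrightarrow> T (scaleC c x) = scaleC c (T x)" by (simp add: clin_op_def)
lemma clin_diff: "clin_op T \<Longrightarrow> T (x - y) = T x - T y"
  by (metis clin_add diff_add_cancel add_diff_cancel_right')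

lemma bclin_clin: "bounded_clinear T \<Longrightarrow> clin_op T"
  by (simp add: bounded_clinear_def clin_op_def)

lemma clin_sum: "clin_op Q \<Longrightarrow> clin_op R \<Longrightarrow> clin_op (\<lambda>x. Q x + R x)"
  by (simp add: clin_op_def scaleC_add_right algebra_simps)

lemma clin_dif: "clin_op Q \<Longrightarrow> clin_op R \<Longrightarrow> clin_op (\<lambda>x. Q x - R x)"
  by (simp add: clin_op_def scaleC_diff_right algebra_simps)

context
  fixes A :: "'a::complex_inner \<Rightarrow> 'a"
  assumes pos: "positive_op A"
begin

lemma A_lin: "clin_op A" using pos by (simp add: positive_op_def bclin_clin)

lemma h_add_left: "A_inner A (x + y) z = A_inner A x z + A_inner A y z"
  by (simp add: A_inner_def clin_add[OF A_lin] cinner_add_left)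
lemma h_diff_left: "A_inner A (x - y) z = A_inner A x z - A_inner A y z"
  by (simp add: A_inner_def clin_diff[OF A_lin] cinner_diff_left)
lemma h_scale_left: "A_inner A (scaleC a x) z = a * A_inner A x z"
  by (simp add: A_inner_def clin_scale[OF A_lin] cinner_scaleC_left)
lemma h_add_right: "A_inner A x (y + z) = A_inner A x y + A_inner A x z"
  by (simp add: A_inner_def cinner_add_right)
lemma h_diff_right: "A_inner A x (y - z) = A_inner A x y - A_inner A x z"
  by (simp add: A_inner_def cinner_diff_right)
lemma h_scale_right: "A_inner A x (scaleC a z) = cnj a * A_inner A x z"
  by (simp add: A_inner_def cinner_scaleC_right)
lemma h_zero_left[simp]: "A_inner A 0 z = 0"
  using h_add_left[of 0 0 z] by simp
lemma h_zero_right[simp]: "A_inner A z 0 = 0"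
  using h_add_right[of z 0 0] by simp

lemmas h_simps = h_add_left h_diff_left h_scale_left h_add_right h_diff_right h_scale_right

lemma h_Im: "Im (A_inner A x x) = 0" using pos by (simp add: positive_op_def A_inner_def)
lemma h_Re: "0 \<le> Re (A_inner A x x)" using pos by (simp add: positive_op_def A_inner_def)
lemma h_real: "A_inner A x x = complex_of_real (Re (A_inner A x x))"
  using h_Im by (simp add: complex_eq_iff)

lemma h_herm: "A_inner A y x = cnj (A_inner A x y)"
proof -
  define a where "a = A_inner A x y"
  define b where "b = A_inner A y x"
  have e1: "A_inner A (x + y) (x + y) = A_inner A x x + a + b + A_inner A y y"
    by (simp add: h_simps a_def b_def)
  have e2: "A_inner A (x + scaleC \<i> y) (x + scaleC \<i> y) = A_inner A x x - \<i> * a + \<i> * b + A_inner A y y"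
    by (simp add: h_simps a_def b_def algebra_simps)
  have "Im (a + b) = 0" using e1 h_Im[of "x+y"] h_Im[of x] h_Im[of y] by simp
  moreover have "Re b - Re a = 0" using e2 h_Im[of "x + scaleC \<i> y"] h_Im[of x] h_Im[of y] by simp
  ultimately show ?thesis unfolding a_def[symmetric] b_def[symmetric] by (simp add: complex_eq_iff)
qed


lemma real_cs_aux:
  fixes p n r :: real
  assumes "\<forall>t. 0 \<le> p - 2*t*n + t^2*n*r" "0 \<le> n" "0 \<le> p" "0 \<le> r"
  shows "n \<le> p * r"
proof (cases "r = 0")
  case True
  show ?thesis
  proof (rule ccontr)
    assume "\<not> n \<le> p * r"
    hence "n > 0" using True by simp
    have "0 \<le> p - 2*((p+1)/(2*n))*n" using assms(1)[rule_format, of "(p+1)/(2*n)"] True by simp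
    also have "\<dots> = -1" using \<open>n>0\<close> by (simp add: field_simps)
    finally show False by simp
  qed
next
  case False
  hence "r > 0" using assms by simp
  have "0 \<le> p - 2*(1/r)*n + (1/r)^2*n*r" using assms(1) by blast
  also have "\<dots> = (p*r - n)/r" using \<open>r>0\<close> by (simp add: field_simps power2_eq_square)
  finally show ?thesis using \<open>r>0\<close> by (simp add: divide_nonneg_pos zero_le_divide_iff)
qed

lemma h_cs_sq: "(cmod (A_inner A x y))^2 \<le> Re (A_inner A x x) * Re (A_inner A y y)"
proof -
  define a where "a = A_inner A x y"
  define n where "n = (cmod a)^2"
  have an: "a * cnj a = complex_of_real n" by (simp add: n_def complex_norm_square[symmetric])
  have "\<forall>t. 0 \<le> Re (A_inner A x x) - 2*t*n + t^2*n*Re (A_inner A y y)"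
  proof
    fix t :: real
    define l where "l = complex_of_real t * a"
    have "A_inner A (x - scaleC l y) (x - scaleC l y)
        = A_inner A x x - cnj l * a - l * A_inner A y x + l * cnj l * A_inner A y y"
      by (simp add: h_simps a_def algebra_simps)
    also have "\<dots> = A_inner A x x - complex_of_real (2*t) * (a * cnj a) + complex_of_real (t^2) * (a * cnj a) * A_inner A y y"
      by (simp add: h_herm[of y x] a_def[symmetric] l_def algebra_simps power2_eq_square)
    also have "\<dots> = A_inner A x x - complex_of_real (2*t*n) + complex_of_real (t^2*n) * A_inner A y y"
      unfolding an by simp
    finally show "0 \<le> Re (A_inner A x x) - 2*t*n + t^2*n*Re (A_inner A y y)"
      using h_Re[of "x - scaleC l y"] by simp
  qed
  thus ?thesis using real_cs_aux[of "Re (A_inner A x x)" n "Re (A_inner A y y)"] h_Re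
    by (simp add: n_def a_def)
qed

lemma h_cs: "cmod (A_inner A x y) \<le> A_norm A x * A_norm A y"
proof -
  have "cmod (A_inner A x y) \<le> sqrt (Re (A_inner A x x) * Re (A_inner A y y))"
    using h_cs_sq real_le_rsqrt by blast
  thus ?thesis by (simp add: A_norm_def real_sqrt_mult)
qed

lemma A_norm_sq: "(A_norm A x)^2 = Re (A_inner A x x)"
  by (simp add: A_norm_def h_Re)

definition Gop :: "('a \<Rightarrow> 'a) \<Rightarrow> bool" where
  "Gop T \<longleftrightarrow> clin_op T \<and> (\<exists>c. \<forall>x. cmod (A_inner A (T x) x) \<le> c * Re (A_inner A x x))"

lemma B_Gop: assumes "T \<in> B_A_half A" shows "Gop T"
proof -
  from assms obtain c where bc: "bounded_clinear T" and c: "\<forall>x. A_norm A (T x) \<le> c * A_norm A x" "c > 0"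
    by (auto simp: B_A_half_def)
  have "cmod (A_inner A (T x) x) \<le> c * Re (A_inner A x x)" for x
  proof -
    have "cmod (A_inner A (T x) x) \<le> A_norm A (T x) * A_norm A x" by (rule h_cs)
    also have "\<dots> \<le> c * A_norm A x * A_norm A x"
      using c(1)[rule_format, of x] real_sqrt_ge_zero[OF h_Re[of x]] by (simp add: mult_right_mono A_norm_def)
    also have "\<dots> = c * Re (A_inner A x x)" using A_norm_sq[of x] by (simp add: power2_eq_square)
    finally show ?thesis .
  qed
  thus ?thesis using bc by (auto simp: Gop_def bclin_clin)
qed

lemma Gop_sum: assumes "Gop Q" "Gop R" shows "Gop (\<lambda>x. Q x + R x)" "Gop (\<lambda>x. Q x - R x)"
proof -
  from assms obtain c1 c2 where c1: "\<forall>x. cmod (A_inner A (Q x) x) \<le> c1 * Re (A_inner A x x)"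
    and c2: "\<forall>x. cmod (A_inner A (R x) x) \<le> c2 * Re (A_inner A x x)" and l: "clin_op Q" "clin_op R"
    by (auto simp: Gop_def)
  have "cmod (A_inner A (Q x + R x) x) \<le> (c1 + c2) * Re (A_inner A x x)" for x
    using norm_triangle_ineq[of "A_inner A (Q x) x" "A_inner A (R x) x"] c1[rule_format, of x] c2[rule_format, of x]
    by (simp add: h_simps algebra_simps)
  thus "Gop (\<lambda>x. Q x + R x)" using l clin_sum by (auto simp: Gop_def)
  have "cmod (A_inner A (Q x - R x) x) \<le> (c1 + c2) * Re (A_inner A x x)" for x
    using norm_triangle_ineq4[of "A_inner A (Q x) x" "A_inner A (R x) x"] c1[rule_format, of x] c2[rule_format, of x]
    by (simp add: h_simps algebra_simps)
  thus "Gop (\<lambda>x. Q x - R x)" using l clin_dif by (auto simp: Gop_def)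
qed


lemma Re_ofr_mult: "Re (complex_of_real r * z) = r * Re z" by simp

lemma h_scale_real: "A_inner A (scaleC (complex_of_real r) x) (scaleC (complex_of_real r) y) = complex_of_real (r*r) * A_inner A x y"
  by (simp add: h_simps)

lemma key: assumes "Gop T" shows "cmod (A_inner A (T x) x) \<le> omega_A A T * Re (A_inner A x x)"
proof -
  from assms obtain c where l: "clin_op T" and c: "\<forall>x. cmod (A_inner A (T x) x) \<le> c * Re (A_inner A x x)"
    by (auto simp: Gop_def)
  define M where "M = {cmod (A_inner A (T x) x) | x. A_norm A x = 1}"
  have bdd: "bdd_above M"
  proof (rule bdd_aboveI)
    fix m assume "m \<in> M"
    then obtain y where "m = cmod (A_inner A (T y) y)" "A_norm A y = 1" by (auto simp: M_def)
    moreover have "Re (A_inner A y y) = 1" using A_norm_sq[of y] \<open>A_norm A y = 1\<close> by simp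
    ultimately show "m \<le> c" using c[rule_format, of y] by simp
  qed
  show ?thesis
  proof (cases "Re (A_inner A x x) = 0")
    case True
    then show ?thesis using c[rule_format, of x] by simp
  next
    case False
    hence qp: "Re (A_inner A x x) > 0" using h_Re[of x] by simp
    define s where "s = sqrt (Re (A_inner A x x))"
    have sp: "s > 0" using qp by (simp add: s_def)
    have ss: "s * s = Re (A_inner A x x)" using qp by (simp add: s_def)
    define y where "y = scaleC (complex_of_real (1/s)) x"
    have hy: "A_inner A (T y) y = complex_of_real (1/s * (1/s)) * A_inner A (T x) x"
      unfolding y_def clin_scale[OF l] h_scale_real ..
    have hyy: "A_inner A y y = complex_of_real (1/s * (1/s)) * A_inner A x x"
      unfolding y_def h_scale_real ..
    have "Re (A_inner A y y) = (1/s*(1/s)) * (s * s)" unfolding hyy ss by (rule Re_ofr_mult)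
    hence "Re (A_inner A y y) = 1" using sp by simp
    hence "A_norm A y = 1" by (simp add: A_norm_def)
    hence "cmod (A_inner A (T y) y) \<in> M" by (auto simp: M_def)
    hence "cmod (A_inner A (T y) y) \<le> omega_A A T" using bdd by (simp add: omega_A_def M_def cSup_upper)
    moreover have "cmod (A_inner A (T y) y) = cmod (A_inner A (T x) x) / (s * s)"
    proof -
      have "A_inner A (T x) x = complex_of_real (s * s) * A_inner A (T y) y"
        using hy sp by (simp add: field_simps)
      hence "cmod (A_inner A (T x) x) = (s * s) * cmod (A_inner A (T y) y)"
        using sp by (simp add: norm_mult abs_mult)
      thus ?thesis using sp by simp
    qed
    ultimately show ?thesis using ss sp qp by (simp add: pos_divide_le_eq)
  qed
qed

lemma offdiag:
  assumes "Gop Q" "Gop R"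
  shows "cmod (A_inner A (Q v) u + A_inner A (R u) v)
     \<le> (omega_A A (\<lambda>x. Q x + R x) + omega_A A (\<lambda>x. Q x - R x)) / 2 * (Re (A_inner A u u) + Re (A_inner A v v))"
proof -
  define B where "B = (\<lambda>x. Q x + R x)"
  define C where "C = (\<lambda>x. Q x - R x)"
  have lQ: "clin_op Q" and lR: "clin_op R" using assms by (auto simp: Gop_def)
  have GB: "Gop B" and GC: "Gop C" using Gop_sum[OF assms] by (auto simp: B_def C_def)
  define w1 where "w1 = u + v"
  define w2 where "w2 = u - v"
  define w3 where "w3 = u + scaleC \<i> v"
  define w4 where "w4 = u - scaleC \<i> v"
  have iden: "4 * (A_inner A (Q v) u + A_inner A (R u) v)
     = (A_inner A (B w1) w1 - A_inner A (B w2) w2) - \<i> * (A_inner A (C w3) w3 - A_inner A (C w4) w4)"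
    unfolding B_def C_def w1_def w2_def w3_def w4_def
    by (simp add: clin_add[OF lQ] clin_add[OF lR] clin_diff[OF lQ] clin_diff[OF lR]
        clin_scale[OF lQ] clin_scale[OF lR] h_simps scaleC_add_right scaleC_diff_right algebra_simps)
  have q12: "A_inner A w1 w1 + A_inner A w2 w2 = 2 * (A_inner A u u + A_inner A v v)"
    unfolding w1_def w2_def by (simp add: h_simps algebra_simps)
  have q34: "A_inner A w3 w3 + A_inner A w4 w4 = 2 * (A_inner A u u + A_inner A v v)"
    unfolding w3_def w4_def by (simp add: h_simps algebra_simps)
  have "4 * cmod (A_inner A (Q v) u + A_inner A (R u) v)
      \<le> cmod (A_inner A (B w1) w1) + cmod (A_inner A (B w2) w2) + (cmod (A_inner A (C w3) w3) + cmod (A_inner A (C w4) w4))"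
  proof -
    have "4 * cmod (A_inner A (Q v) u + A_inner A (R u) v) = cmod (4 * (A_inner A (Q v) u + A_inner A (R u) v))"
      by (subst norm_mult) simp
    also have "\<dots> \<le> cmod (A_inner A (B w1) w1 - A_inner A (B w2) w2) + cmod (\<i> * (A_inner A (C w3) w3 - A_inner A (C w4) w4))"
      unfolding iden by (rule norm_triangle_ineq4)
    also have "\<dots> \<le> cmod (A_inner A (B w1) w1) + cmod (A_inner A (B w2) w2) + (cmod (A_inner A (C w3) w3) + cmod (A_inner A (C w4) w4))"
      by (intro add_mono norm_triangle_ineq4) (simp add: norm_mult norm_triangle_ineq4)
    finally show ?thesis .
  qed
  also have "\<dots> \<le> omega_A A B * Re (A_inner A w1 w1) + omega_A A B * Re (A_inner A w2 w2)
      + (omega_A A C * Re (A_inner A w3 w3) + omega_A A C * Re (A_inner A w4 w4))"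
    by (intro add_mono key GB GC)
  also have "\<dots> = omega_A A B * Re (A_inner A w1 w1 + A_inner A w2 w2) + omega_A A C * Re (A_inner A w3 w3 + A_inner A w4 w4)"
    by (simp add: algebra_simps)
  also have "\<dots> = 2 * (omega_A A B + omega_A A C) * (Re (A_inner A u u) + Re (A_inner A v v))"
    unfolding q12 q34 by (simp add: algebra_simps)
  finally show ?thesis unfolding B_def C_def by (simp add: field_simps)
qed

lemma exists_unit: assumes "A \<noteq> (\<lambda>x. 0)" shows "\<exists>y. A_norm A y = 1"
proof -
  obtain z where z: "A z \<noteq> 0" using assms by auto
  have "\<exists>x. Re (A_inner A x x) \<noteq> 0"
  proof (rule ccontr)
    assume "\<not> ?thesis"
    hence "(cmod (A_inner A z (A z)))^2 \<le> 0" using h_cs_sq[of z "A z"] by simp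
    hence "cinner (A z) (A z) = 0" by (simp add: A_inner_def)
    thus False using z cinner_self_eq_zero by blast
  qed
  then obtain x where "Re (A_inner A x x) \<noteq> 0" by blast
  hence qp: "Re (A_inner A x x) > 0" using h_Re[of x] by simp
  define s where "s = sqrt (Re (A_inner A x x))"
  have sp: "s > 0" using qp by (simp add: s_def)
  have ss: "s * s = Re (A_inner A x x)" using qp by (simp add: s_def)
  define y where "y = scaleC (complex_of_real (1/s)) x"
  have hyy: "A_inner A y y = complex_of_real (1/s * (1/s)) * A_inner A x x"
    unfolding y_def h_scale_real ..
  have "Re (A_inner A y y) = (1/s*(1/s)) * (s * s)" unfolding hyy ss by (rule Re_ofr_mult)
  hence "Re (A_inner A y y) = 1" using sp by simp
  hence "A_norm A y = 1" by (simp add: A_norm_def)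
  thus ?thesis by blast
qed

end

theorem theorem2p7:
  fixes A P Q R S :: "'a::{complex_inner, complete_space} \<Rightarrow> 'a"
  assumes "positive_op A" and "A \<noteq> (\<lambda>x. 0)"
    and "P \<in> B_A_half A" and "Q \<in> B_A_half A" and "R \<in> B_A_half A" and "S \<in> B_A_half A"
  shows "omega_AA A (block_op P Q R S)
     \<le> max (omega_A A P) (omega_A A S)
        + (omega_A A (\<lambda>x. Q x + R x) + omega_A A (\<lambda>x. Q x - R x)) / 2"
proof -
  note pos = assms(1)
  have G: "Gop A P" "Gop A Q" "Gop A R" "Gop A S" using B_Gop[OF pos] assms(3-6) by auto
  have lP: "clin_op P" and lQ: "clin_op Q" and lR: "clin_op R" and lS: "clin_op S"
    using G by (auto simp: Gop_def[OF pos])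
  obtain y where y: "A_norm A y = 1" using exists_unit[OF pos assms(2)] by blast
  have ne: "{cmod (AA_inner A (block_op P Q R S x) x) | x. AA_norm A x = 1} \<noteq> {}"
  proof -
    have "Re (A_inner A y y) = 1" using A_norm_sq[OF pos, of y] y by simp
    hence "AA_norm A (y, 0) = 1" by (simp add: AA_norm_def AA_inner_def h_zero_left[OF pos])
    thus ?thesis by blast
  qed
  show ?thesis unfolding omega_AA_def
  proof (rule cSup_least[OF ne])
    fix m assume "m \<in> {cmod (AA_inner A (block_op P Q R S x) x) | x. AA_norm A x = 1}"
    then obtain u v where m: "m = cmod (AA_inner A (block_op P Q R S (u, v)) (u, v))"
      and n1: "AA_norm A (u, v) = 1" by auto
    have "Re (A_inner A u u + A_inner A v v) = 1" using n1
      by (simp add: AA_norm_def AA_inner_def)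
    hence n: "Re (A_inner A u u) + Re (A_inner A v v) = 1" by simp
    have e: "AA_inner A (block_op P Q R S (u, v)) (u, v)
        = A_inner A (P u) u + A_inner A (S v) v + (A_inner A (Q v) u + A_inner A (R u) v)"
      by (simp add: AA_inner_def block_op_def h_add_left[OF pos])
    have "m \<le> cmod (A_inner A (P u) u) + cmod (A_inner A (S v) v) + cmod (A_inner A (Q v) u + A_inner A (R u) v)"
      unfolding m e by (intro order_trans[OF norm_triangle_ineq] add_mono norm_triangle_ineq order_refl)
    also have "\<dots> \<le> omega_A A P * Re (A_inner A u u) + omega_A A S * Re (A_inner A v v)
       + (omega_A A (\<lambda>x. Q x + R x) + omega_A A (\<lambda>x. Q x - R x)) / 2 * (Re (A_inner A u u) + Re (A_inner A v v))"
      by (intro add_mono key[OF pos] offdiag[OF pos] G)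
    also have "omega_A A P * Re (A_inner A u u) + omega_A A S * Re (A_inner A v v)
        \<le> max (omega_A A P) (omega_A A S) * Re (A_inner A u u) + max (omega_A A P) (omega_A A S) * Re (A_inner A v v)"
      by (intro add_mono mult_right_mono h_Re[OF pos]) auto
    also have "max (omega_A A P) (omega_A A S) * Re (A_inner A u u) + max (omega_A A P) (omega_A A S) * Re (A_inner A v v)
          = max (omega_A A P) (omega_A A S)"
      using n by (simp flip: distrib_left)
    finally show "m \<le> max (omega_A A P) (omega_A A S)
        + (omega_A A (\<lambda>x. Q x + R x) + omega_A A (\<lambda>x. Q x - R x)) / 2"
      using n by simp
  qed
qed

end
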